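(* Let $r>0$ and let $\mathcal D=\{({\bm{x}}_i,y_i)\}_{i=1}^n$, ${\bm{x}}_i\in\mathbb{R}^d$, $y_i\in[K]$, be a dataset that is $r$-separated with respect to the $\ell_\infty$-norm. Then there exists a two-layer $\ell_\infty$-distance net ${\bm{g}}:\mathbb{R}^d\to\mathbb{R}^K$ with hidden size $n$ such that the margin-based certified $\ell_\infty$ robust accuracy on $\mathcal D$ under perturbation $\epsilon=r$ is $100\%$, i.e. $\mathsf{margin}({\bm{x}}_i,y_i;{\bm{g}})/2>r$ for every $i\in[n]$.
   Context: $r$-separation: $\mathcal D$ is $r$-separated w.r.t. $\ell_\infty$ if for all $i,j$ with $y_i\neq y_j$ one has $\|{\bm{x}}_i-{\bm{x}}_j\|_\infty>2r$. An $L$-layer $\ell_\infty$-distance net ${\bm{g}}$ with input ${\bm{x}}^{(0)}={\bm{x}}$ computes $x^{(l)}_i=\|{\bm{x}}^{(l-1)}-{\bm{w}}^{(l,i)}\|_\infty+b^{(l)}_i$ ($l\in[L]$, $i\in[n_l]$, arbitrary real parameters), with $n_L=K$ and ${\bm{g}}({\bm{x}})={\bm{x}}^{(L)}$; "hidden size" is the width $n_l$ of the hidden layers $l<L$. The output margin is $\mathsf{margin}({\bm{x}},y;{\bm{g}})=[{\bm{g}}({\bm{x}})]_y-\max_{j\neq y}[{\bm{g}}({\bm{x}})]_j$. Margin-based certification declares the labeled point $({\bm{x}},y)$ certifiably robust at level $\epsilon$ iff $\mathsf{margin}({\bm{x}},y;{\bm{g}})/2>\epsilon$. *)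

theory Defs
  imports "HOL-Analysis.Analysis"
begin

text \<open>Conventions: the input dimension d is the finite index type 'd (points in real^'d),
  the dataset index set [n] is the finite type 'n (n = CARD('n)), the label set [K] is the
  finite type 'k (K = CARD('k)).\<close>

definition r_separated :: "real \<Rightarrow> ('n::finite \<Rightarrow> real^'d::finite) \<Rightarrow> ('n \<Rightarrow> 'k) \<Rightarrow> bool" where
  "r_separated r X Y \<longleftrightarrow> (\<forall>i j. Y i \<noteq> Y j \<longrightarrow> infnorm (X i - X j) > 2 * r)"

definition linf_layer :: "real^'a::finite^'m::finite \<Rightarrow> real^'m \<Rightarrow> real^'a \<Rightarrow> real^'m" where
  "linf_layer W b v = (\<chi> i. infnorm (v - W $ i) + b $ i)"

definition linf_net2 ::
  "real^'d::finite^'h::finite \<Rightarrow> real^'h \<Rightarrow> real^'h^'k::finite \<Rightarrow> real^'k \<Rightarrow> real^'d \<Rightarrow> real^'k" where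
  "linf_net2 W1 b1 W2 b2 x = linf_layer W2 b2 (linf_layer W1 b1 x)"

definition margin :: "(real^'d \<Rightarrow> real^'k::finite) \<Rightarrow> real^'d \<Rightarrow> 'k \<Rightarrow> real" where
  "margin g x y = g x $ y - Max {g x $ j | j. j \<noteq> y}"

end

theory Submission
  imports Defs
begin

lemma infnorm_attained: "\<exists>j. infnorm (x::real^'n::finite) = \<bar>x$j\<bar>"
proof -
  have fin: "finite {\<bar>x$i\<bar> |i. i\<in>UNIV}"
    using finite_image_set[of "\<lambda>i. i\<in>UNIV" "\<lambda>i. \<bar>x$i\<bar>"] by simp
  have ne: "{\<bar>x$i\<bar> |i. i\<in>UNIV} \<noteq> {}" by blast
  have "infnorm x = Max {\<bar>x$i\<bar> |i. i\<in>UNIV}"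
    using infnorm_cart[of x] cSup_eq_Max[OF fin ne] by simp
  moreover have "Max {\<bar>x$i\<bar> |i. i\<in>UNIV} \<in> {\<bar>x$i\<bar> |i. i\<in>UNIV}"
    using Max_in[OF fin ne] .
  ultimately show ?thesis by auto
qed

lemma aux: "0 \<le> (h::real) \<Longrightarrow> h \<le> S \<Longrightarrow> 0 < r \<Longrightarrow> \<bar>h - (4*r+1+S)/2\<bar> < (4*r+1+S) - 2*r"
  by (auto simp: abs_less_iff field_simps)

theorem mainTheorem4:
  fixes r :: real
    and X :: "'n::finite \<Rightarrow> real^'d::finite"
    and Y :: "'n \<Rightarrow> 'k::finite"
  assumes "r > 0"
    and "CARD('k) \<ge> 2"
    and "r_separated r X Y"
  shows "\<exists>(W1 :: real^'d^'n) (b1 :: real^'n) (W2 :: real^'n^'k) (b2 :: real^'k).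
           \<forall>i. margin (linf_net2 W1 b1 W2 b2) (X i) (Y i) / 2 > r"
proof -
  define S where "S = (\<Sum>i\<in>UNIV. \<Sum>j\<in>UNIV. infnorm (X i - X j))"
  define C where "C = 4*r + 1 + S"
  define W1 :: "real^'d^'n" where "W1 = (\<chi> j. X j)"
  define W2 :: "real^'n^'k" where "W2 = (\<chi> k. \<chi> j. if Y j = k then C else C/2)"
  have Sle: "infnorm (X i - X j) \<le> S" for i j
  proof -
    have "infnorm (X i - X j) \<le> (\<Sum>j\<in>UNIV. infnorm (X i - X j))"
      by (rule member_le_sum) (auto simp: infnorm_pos_le)
    also have "\<dots> \<le> S" unfolding S_def
      by (rule member_le_sum[where f="\<lambda>i. \<Sum>j\<in>UNIV. infnorm (X i - X j)"])
         (auto intro: sum_nonneg simp: infnorm_pos_le)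
    finally show ?thesis .
  qed
  have S0: "S \<ge> 0" unfolding S_def by (auto intro!: sum_nonneg simp: infnorm_pos_le)
  define g where "g = linf_net2 W1 0 W2 0"
  have gx: "g x $ k = infnorm ((\<chi> j. infnorm (x - X j)) - W2 $ k)" for x k
    unfolding g_def linf_net2_def linf_layer_def W1_def by simp
  have low: "g (X i) $ Y i \<ge> C" for i
  proof -
    have "\<bar>((\<chi> j. infnorm (X i - X j)) - W2 $ Y i) $ i\<bar> = C"
      using assms(1) S0 by (simp add: W2_def C_def infnorm_0)
    thus ?thesis using component_le_infnorm_cart gx by metis
  qed
  have up: "g (X i) $ k < C - 2*r" if "k \<noteq> Y i" for i k
  proof -
    obtain j where j: "g (X i) $ k = \<bar>((\<chi> j. infnorm (X i - X j)) - W2 $ k) $ j\<bar>"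
      using infnorm_attained gx by metis
    have h0: "infnorm (X i - X j) \<ge> 0" by (simp add: infnorm_pos_le)
    have hS: "infnorm (X i - X j) \<le> S" by (rule Sle)
    show ?thesis
    proof (cases "Y j = k")
      case True
      then have "Y i \<noteq> Y j" using that by simp
      then have "infnorm (X i - X j) > 2*r" using assms(3) unfolding r_separated_def by blast
      then show ?thesis using j True hS assms(1) unfolding W2_def C_def by (simp add: abs_if)
    next
      case False
      then have "g (X i) $ k = \<bar>infnorm (X i - X j) - C/2\<bar>" using j unfolding W2_def by simp
      moreover have "\<bar>infnorm (X i - X j) - C/2\<bar> < C - 2*r"
        using aux[OF h0 hS assms(1)] unfolding C_def .
      ultimately show ?thesis by simp
    qed
  qed
  have "margin g (X i) (Y i) / 2 > r" for i
  proof -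
    let ?A = "{g (X i) $ j | j. j \<noteq> Y i}"
    have fin: "finite ?A" by simp
    have "\<exists>j::'k. j \<noteq> Y i"
    proof (rule ccontr)
      assume "\<not> ?thesis"
      then have "(UNIV::'k set) = {Y i}" by auto
      then show False using assms(2) by (metis card.empty card.insert empty_iff finite.emptyI one_le_numeral not_less_eq_eq numeral_le_one_iff semiring_norm(69) One_nat_def)
    qed
    then have ne: "?A \<noteq> {}" by auto
    have "Max ?A \<in> ?A" using Max_in[OF fin ne] .
    then have "Max ?A < C - 2*r" using up by auto
    then show ?thesis using low[of i] unfolding margin_def by simp
  qed
  then show ?thesis unfolding g_def by blast
qed

end
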